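(* For $n\ge 2$, the number of interval-closed sets of $[2]\times[n]$ is \[|\mathcal{IC}([2]\times[n])|=1+2\left(\binom n2+n\right)+\frac{n+1}{2}\binom{n+2}{3}.\] Here $1$ counts the empty set, $2(\binom n2+n)$ counts the nonempty interval-closed sets contained entirely in the chain $\{(1,i)\}$ or entirely in the chain $\{(2,i)\}$, and $\frac{n+1}{2}\binom{n+2}{3}$ counts those meeting both chains.
   Context: $[n]$ is the chain $1<\cdots<n$; $[2]\times[n]$ is the Cartesian product poset with $(a,b)\le(c,d)$ iff $a\le c$ and $b\le d$. A subset $I$ of a poset is interval-closed if for all $x,y\in I$ and $z$ with $x\le z\le y$ we have $z\in I$; $\mathcal{IC}(P)$ is the set of interval-closed subsets. *)

theory Defs
  imports Complex_Main
begin

definition two_by_n :: "nat \<Rightarrow> (nat \<times> nat) set" where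
  "two_by_n n = {1..2::nat} \<times> {1..n}"

definition prod_le :: "nat \<times> nat \<Rightarrow> nat \<times> nat \<Rightarrow> bool" where
  "prod_le p q \<longleftrightarrow> fst p \<le> fst q \<and> snd p \<le> snd q"

definition interval_closed :: "'a set \<Rightarrow> ('a \<Rightarrow> 'a \<Rightarrow> bool) \<Rightarrow> 'a set \<Rightarrow> bool" where
  "interval_closed P le I \<longleftrightarrow> I \<subseteq> P \<and>
     (\<forall>x\<in>I. \<forall>y\<in>I. \<forall>z\<in>P. le x z \<and> le z y \<longrightarrow> z \<in> I)"

definition IC :: "'a set \<Rightarrow> ('a \<Rightarrow> 'a \<Rightarrow> bool) \<Rightarrow> 'a set set" where
  "IC P le = {I. interval_closed P le I}"

end

theory Submission
  imports Defs
begin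

definition Phi :: "nat set \<Rightarrow> nat set \<Rightarrow> (nat \<times> nat) set" where
  "Phi A B = Pair 1 ` A \<union> Pair 2 ` B"

definition Iv :: "nat \<Rightarrow> nat set set" where
  "Iv n = (\<lambda>(h,l). {l..h}) ` (SIGMA h:{1..n}. {1..h})"

definition Sn :: "nat \<Rightarrow> (nat \<times> nat \<times> nat \<times> nat) set" where
  "Sn n = (SIGMA a2:{1..n}. SIGMA a1:{1..a2}.
      (SIGMA b2:{1..a1-1}. {1..b2}) \<union> (SIGMA b2:{a1..a2}. {1..a1}))"

definition q :: "nat \<times> nat \<times> nat \<times> nat \<Rightarrow> nat set \<times> nat set" where
  "q t = (case t of (a2,a1,b2,b1) \<Rightarrow> ({a1..a2},{b1..b2}))"

definition Q :: "nat \<Rightarrow> (nat set \<times> nat set) set" where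
  "Q n = {({},{})} \<union> ({{}} \<times> Iv n) \<union> (Iv n \<times> {{}}) \<union> q ` Sn n"

lemma sum_id_real: "(\<Sum>a=1..h. real a) = real h * (real h + 1) / 2"
  by (induction h) (auto simp: field_simps)

lemma sum_sq_real: "(\<Sum>a=1..h. real a ^ 2) = real h * (real h + 1) * (2 * real h + 1) / 6"
  by (induction h) (auto simp: field_simps power2_eq_square)

lemma sum_id_nat_real: "real (\<Sum>b=1..m. b) = real m * (real m + 1) / 2"
  using sum_id_real[of m] by simp

lemma inner_real:
  "real (\<Sum>a1=1..h. (\<Sum>b2=1..a1-1. b2) + (h + 1 - a1) * a1)
   = real h * (real h + 1) * (2 * real h + 1) / 6"
proof -
  have "real (\<Sum>a1=1..h. (\<Sum>b2=1..a1-1. b2) + (h + 1 - a1) * a1)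
      = (\<Sum>a1=1..h. (real h + 1/2) * real a1 - (1/2) * real a1 ^ 2)"
    unfolding of_nat_sum
  proof (rule sum.cong[OF refl])
    fix a assume a: "a \<in> {1..h}"
    then have "real (a - 1) = real a - 1" by auto
    moreover have "real (h + 1 - a) = real h + 1 - real a" using a by auto
    ultimately show "real ((\<Sum>b2 = 1..a - 1. b2) + (h + 1 - a) * a)
       = (real h + 1/2) * real a - (1/2) * real a ^ 2"
    proof -
      have "real ((\<Sum>b2 = 1..a - 1. b2) + (h + 1 - a) * a)
          = real (\<Sum>b2 = 1..a - 1. b2) + real (h + 1 - a) * real a"
        by (simp only: of_nat_add of_nat_mult)
      also have "\<dots> = real (a-1) * (real (a-1) + 1) / 2 + real (h + 1 - a) * real a"
        by (simp only: sum_id_nat_real)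
      also have "\<dots> = (real a - 1) * real a / 2 + (real h + 1 - real a) * real a"
        using \<open>real (a - 1) = real a - 1\<close> \<open>real (h + 1 - a) = real h + 1 - real a\<close>
        by simp
      also have "\<dots> = (real h + 1/2) * real a - (1/2) * real a ^ 2"
        by (simp add: field_simps power2_eq_square)
      finally show ?thesis .
    qed
  qed
  also have "\<dots> = (real h + 1/2) * (\<Sum>a1=1..h. real a1) - (1/2) * (\<Sum>a1=1..h. real a1 ^ 2)"
    by (simp add: sum_subtractf sum_distrib_left)
  also have "\<dots> = real h * (real h + 1) * (2 * real h + 1) / 6"
    unfolding sum_id_real sum_sq_real by (simp add: field_simps)
  finally show ?thesis .
qed

lemma outer_real:
  "(\<Sum>h=1..n. real h * (real h + 1) * (2 * real h + 1) / 6)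
   = real n * (real n + 1)^2 * (real n + 2) / 12"
  by (induction n) (auto simp: field_simps power2_eq_square)

lemma choose3: "6 * ((n + 2) choose 3) = n * (n + 1) * (n + 2)"
proof (induction n)
  case 0 then show ?case by simp
next
  case (Suc n)
  have "(Suc n + 2) choose 3 = ((n+2) choose 2) + ((n+2) choose 3)"
    by (simp add: numeral_3_eq_3 numeral_2_eq_2)
  moreover have "2 * ((n+2) choose 2) = (n+2)*(n+1)"
    unfolding choose_two by simp
  ultimately show ?case using Suc by (simp add: algebra_simps)
qed


lemma Phi_inj: "inj (case_prod Phi)"
proof (rule injI)
  fix x y :: "nat set \<times> nat set"
  assume e: "case_prod Phi x = case_prod Phi y"
  obtain A B where x: "x = (A,B)" by (cases x)
  obtain A' B' where y: "y = (A',B')" by (cases y)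
  have "A = {i. (1,i) \<in> Phi A B}" "B = {i. (2,i) \<in> Phi A B}" by (auto simp: Phi_def)
  moreover have "A' = {i. (1,i) \<in> Phi A' B'}" "B' = {i. (2,i) \<in> Phi A' B'}" by (auto simp: Phi_def)
  ultimately show "x = y" using e x y by auto
qed

lemma card_Sigma_tri: "card (SIGMA h:{1..n}. {1..h}) = (\<Sum>h=1..n. h)"
  by simp

lemma card_Iv: "card (Iv n) = (\<Sum>h=1..n. h)"
proof -
  have "inj_on (\<lambda>(h,l). {l..h}) (SIGMA h:{1..n}. {1..h})"
    by (auto simp: inj_on_def)
  then show ?thesis unfolding Iv_def by (simp add: card_image)
qed

lemma finite_Sn: "finite (Sn n)"
  unfolding Sn_def by auto

lemma card_Sn: "card (Sn n) = (\<Sum>h=1..n. \<Sum>a1=1..h. (\<Sum>b2=1..a1-1. b2) + (h + 1 - a1) * a1)"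
  unfolding Sn_def
proof (subst card_SigmaI, simp, simp, rule sum.cong[OF refl])
  fix h assume "h \<in> {1..n}"
  show "card (SIGMA a1:{1..h}. (SIGMA b2:{1..a1-1}. {1..b2}) \<union> (SIGMA b2:{a1..h}. {1..a1}))
      = (\<Sum>a1=1..h. (\<Sum>b2=1..a1-1. b2) + (h + 1 - a1) * a1)"
  proof (subst card_SigmaI, simp, simp, rule sum.cong[OF refl])
    fix a assume "a \<in> {1..h}"
    have "card ((SIGMA b2:{1..a-1}. {1..b2}) \<union> (SIGMA b2:{a..h}. {1..a}))
        = card (SIGMA b2:{1..a-1}. {1..b2}) + card (SIGMA b2:{a..h}. {1..a})"
      by (rule card_Un_disjoint) auto
    then show "card ((SIGMA b2:{1..a-1}. {1..b2}) \<union> (SIGMA b2:{a..h}. {1..a}))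
        = (\<Sum>b2=1..a-1. b2) + (h + 1 - a) * a"
      by simp
  qed
qed

lemma inj_q: "inj_on q (Sn n)"
  unfolding inj_on_def Sn_def q_def by auto

lemma card_Q: "card (Q n) = 1 + 2 * (\<Sum>h=1..n. h) + card (Sn n)"
proof -
  have fI: "finite (Iv n)" unfolding Iv_def by auto
  have ne: "{} \<notin> Iv n" unfolding Iv_def by auto
  have qne: "\<And>t. t \<in> Sn n \<Longrightarrow> fst (q t) \<noteq> {} \<and> snd (q t) \<noteq> {}"
    unfolding Sn_def q_def by auto
  have c1: "card ({({},{})} \<union> ({{}} \<times> Iv n)) = 1 + card (Iv n)"
    using fI ne by (subst card_Un_disjoint) (auto simp: card_cartesian_product)
  have c2: "card ({({},{})} \<union> ({{}} \<times> Iv n) \<union> (Iv n \<times> {{}}))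
      = 1 + card (Iv n) + card (Iv n)"
    using fI ne c1 by (subst card_Un_disjoint) (auto simp: card_cartesian_product)
  have c3: "card (Q n) = 1 + card (Iv n) + card (Iv n) + card (q ` Sn n)"
    unfolding Q_def using fI ne c2 qne finite_Sn
    by (subst card_Un_disjoint) (auto, (metis fst_conv snd_conv)+)
  show ?thesis using c3 card_Iv[of n] card_image[OF inj_q[of n]] by simp
qed


lemma Phi_IC:
  assumes A: "A \<subseteq> {1..n}" and B: "B \<subseteq> {1..n}"
    and cA: "\<And>x y z. x \<in> A \<Longrightarrow> y \<in> A \<Longrightarrow> x \<le> z \<Longrightarrow> z \<le> y \<Longrightarrow> z \<in> A"
    and cB: "\<And>x y z. x \<in> B \<Longrightarrow> y \<in> B \<Longrightarrow> x \<le> z \<Longrightarrow> z \<le> y \<Longrightarrow> z \<in> B"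
    and cAB: "\<And>x y z. x \<in> A \<Longrightarrow> y \<in> B \<Longrightarrow> x \<le> z \<Longrightarrow> z \<le> y \<Longrightarrow> z \<in> A \<and> z \<in> B"
  shows "interval_closed (two_by_n n) prod_le (Phi A B)"
  unfolding interval_closed_def
proof (intro conjI ballI impI)
  show "Phi A B \<subseteq> two_by_n n" using A B by (auto simp: Phi_def two_by_n_def)
next
  fix x y z assume x: "x \<in> Phi A B" and y: "y \<in> Phi A B" and z: "z \<in> two_by_n n"
    and le: "prod_le x z \<and> prod_le z y"
  obtain c d where zz: "z = (c,d)" by (cases z)
  have c: "c = 1 \<or> c = 2" using z zz by (auto simp: two_by_n_def)
  have mem: "\<And>a b c X. ((a::nat),(b::nat)) \<in> Pair c ` X \<longleftrightarrow> a = c \<and> b \<in> X" by auto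
  from x obtain i a where xi: "x = (i,a)" "(i = 1 \<and> a \<in> A) \<or> (i = 2 \<and> a \<in> B)"
    unfolding Phi_def by auto
  from y obtain j b where yj: "y = (j,b)" "(j = 1 \<and> b \<in> A) \<or> (j = 2 \<and> b \<in> B)"
    unfolding Phi_def by auto
  have l: "i \<le> c" "c \<le> j" "a \<le> d" "d \<le> b" using le xi yj zz by (auto simp: prod_le_def)
  show "z \<in> Phi A B"
    unfolding Phi_def zz Un_iff mem
    using xi(2) yj(2) l c cA[of a b d] cB[of a b d] cAB[of a b d] by auto
qed


lemma fw1:
  assumes sub: "I \<subseteq> two_by_n n"
  shows "I = Phi {i. (1,i) \<in> I} {i. (2,i) \<in> I}"
proof (intro equalityI subsetI)
  fix x assume x: "x \<in> I"
  obtain a b where xx: "x = (a,b)" by (cases x)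
  have "a = 1 \<or> a = 2" using sub x xx by (auto simp: two_by_n_def)
  then show "x \<in> Phi {i. (1,i) \<in> I} {i. (2,i) \<in> I}" using x xx unfolding Phi_def by auto
qed (auto simp: Phi_def)

lemma fw_iv:
  assumes cl: "\<And>x y z. x \<in> I \<Longrightarrow> y \<in> I \<Longrightarrow> z \<in> two_by_n n \<Longrightarrow> prod_le x z \<Longrightarrow> prod_le z y \<Longrightarrow> z \<in> I"
    and c: "c \<in> {1..2}" and As: "{i. (c,i) \<in> I} \<subseteq> {1..n}" and ne: "{i. (c,i) \<in> I} \<noteq> {}"
  shows "{i. (c,i) \<in> I} = {Min {i. (c,i) \<in> I}..Max {i. (c,i) \<in> I}}"
proof -
  define A where "A = {i. (c,i) \<in> I}"
  have fA: "finite A" using As finite_subset unfolding A_def by blast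
  have "A = {Min A..Max A}"
  proof (intro equalityI subsetI)
    fix x assume x: "x \<in> {Min A..Max A}"
    have neA: "A \<noteq> {}" using ne unfolding A_def .
    have m: "Min A \<in> A" "Max A \<in> A" using Min_in[OF fA neA] Max_in[OF fA neA] by auto
    have "(c, x) \<in> I"
    proof (rule cl[of "(c, Min A)" "(c, Max A)"])
      show "(c, Min A) \<in> I" "(c, Max A) \<in> I" using m unfolding A_def by auto
      show "(c, x) \<in> two_by_n n" using x m As c unfolding two_by_n_def A_def by force
      show "prod_le (c, Min A) (c, x)" "prod_le (c, x) (c, Max A)" using x by (auto simp: prod_le_def)
    qed
    then show "x \<in> A" unfolding A_def by simp
  qed (use fA in auto)
  then show ?thesis unfolding A_def .
qed

lemma fw:
  assumes "I \<in> IC (two_by_n n) prod_le"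
  shows "I \<in> case_prod Phi ` Q n"
proof -
  from assms have sub: "I \<subseteq> two_by_n n"
    and cl: "\<And>x y z. x \<in> I \<Longrightarrow> y \<in> I \<Longrightarrow> z \<in> two_by_n n \<Longrightarrow> prod_le x z \<Longrightarrow> prod_le z y \<Longrightarrow> z \<in> I"
    unfolding IC_def interval_closed_def by blast+
  define A where "A = {i. (1,i) \<in> I}"
  define B where "B = {i. (2,i) \<in> I}"
  have I: "I = Phi A B" unfolding A_def B_def by (rule fw1[OF sub])
  have As: "A \<subseteq> {1..n}" "B \<subseteq> {1..n}" using sub unfolding A_def B_def two_by_n_def by auto
  have fA: "finite A" "finite B" using As finite_subset by blast+
  have ivA: "A = {Min A..Max A}" if "A \<noteq> {}"
    using fw_iv[where I=I and n=n and c=1, OF cl] As(1) that unfolding A_def by simp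
  have ivB: "B = {Min B..Max B}" if "B \<noteq> {}"
    using fw_iv[where I=I and n=n and c=2, OF cl] As(2) that unfolding B_def by simp
  have inIv: "{Min X..Max X} \<in> Iv n" if "X \<noteq> {}" "X \<subseteq> {1..n}" "finite X" for X
  proof -
    have i: "Min X \<in> X" "Max X \<in> X" using that by auto
    have "Min X \<le> Max X" using that by auto
    moreover have "1 \<le> Min X" "Max X \<le> n" using i that(2) by auto
    ultimately have "(Max X, Min X) \<in> (SIGMA h:{1..n}. {1..h})" by auto
    then show ?thesis unfolding Iv_def by force
  qed
  have "(A,B) \<in> Q n"
  proof (cases "A = {}")
    case True
    show ?thesis
    proof (cases "B = {}")
      case True with \<open>A = {}\<close> show ?thesis by (simp add: Q_def)
    next
      case False
      then have "B \<in> Iv n" using ivB inIv[of B] As fA by simp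
      then show ?thesis using \<open>A = {}\<close> by (simp add: Q_def)
    qed
  next
    case Ane: False
    show ?thesis
    proof (cases "B = {}")
      case True
      have "A \<in> Iv n" using Ane ivA inIv[of A] As fA by simp
      then show ?thesis using True by (simp add: Q_def)
    next
      case Bne: False
      have m: "Min A \<in> A" "Max A \<in> A" "Min B \<in> B" "Max B \<in> B"
        using Min_in[OF fA(1) Ane] Max_in[OF fA(1) Ane] Min_in[OF fA(2) Bne] Max_in[OF fA(2) Bne] by auto
      have mm: "Min A \<le> Max A" "Min B \<le> Max B" using m fA by auto
      have r: "1 \<le> Min A" "Max A \<le> n" "1 \<le> Min B" "Max B \<le> n" using m As by auto
      have t: "(Max A, Min A, Max B, Min B) \<in> Sn n"
      proof (cases "Max B < Min A")
        case True
        then show ?thesis using mm r unfolding Sn_def by auto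
      next
        case False
        have p1: "(1, Min A) \<in> I" using m(1) unfolding A_def by simp
        have p2: "(2, Max B) \<in> I" using m(4) unfolding B_def by simp
        have "(2, Min A) \<in> I"
        proof (rule cl[OF p1 p2])
          show "(2, Min A) \<in> two_by_n n" using r mm unfolding two_by_n_def by auto
          show "prod_le (1, Min A) (2, Min A)" "prod_le (2, Min A) (2, Max B)"
            using False by (auto simp: prod_le_def)
        qed
        then have "Min A \<in> B" unfolding B_def by simp
        then have 1: "Min B \<le> Min A" using fA by auto
        have "(1, Max B) \<in> I"
        proof (rule cl[OF p1 p2])
          show "(1, Max B) \<in> two_by_n n" using r mm unfolding two_by_n_def by auto
          show "prod_le (1, Min A) (1, Max B)" "prod_le (1, Max B) (2, Max B)"
            using False by (auto simp: prod_le_def)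
        qed
        then have "Max B \<in> A" unfolding A_def by simp
        then have 2: "Max B \<le> Max A" using fA by auto
        show ?thesis using mm r False 1 2 unfolding Sn_def by auto
      qed
      have "q (Max A, Min A, Max B, Min B) = (A, B)"
        using ivA[OF Ane] ivB[OF Bne] by (simp add: q_def)
      then show ?thesis using t unfolding Q_def by (metis UnI2 image_eqI)
    qed
  qed
  then show ?thesis using I by force
qed


lemma Sn_mem: "(a2,a1,b2,b1) \<in> Sn n \<longleftrightarrow> 1 \<le> a1 \<and> a1 \<le> a2 \<and> a2 \<le> n \<and>
   ((1 \<le> b1 \<and> b1 \<le> b2 \<and> b2 \<le> a1 - 1) \<or> (a1 \<le> b2 \<and> b2 \<le> a2 \<and> 1 \<le> b1 \<and> b1 \<le> a1))"
  unfolding Sn_def by auto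

lemma Iv_mem: "X \<in> Iv n \<Longrightarrow> \<exists>l h. X = {l..h} \<and> 1 \<le> l \<and> h \<le> n"
  unfolding Iv_def by auto


lemma Phi_IC_iv:
  assumes "l1 \<ge> 1" "h1 \<le> n" "l2 \<ge> 1" "h2 \<le> n"
    and "\<And>x y z. x \<in> {l1..h1} \<Longrightarrow> y \<in> {l2..h2} \<Longrightarrow> x \<le> z \<Longrightarrow> z \<le> y \<Longrightarrow> z \<in> {l1..h1} \<and> z \<in> {l2..h2}"
  shows "interval_closed (two_by_n n) prod_le (Phi {l1..h1} {l2..h2})"
proof (rule Phi_IC)
  show "{l1..h1} \<subseteq> {1..n}" "{l2..h2} \<subseteq> {1..n}" using assms(1-4) by auto
next
  fix x y z :: nat assume "x \<in> {l1..h1}" "y \<in> {l2..h2}" "x \<le> z" "z \<le> y"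
  then show "z \<in> {l1..h1} \<and> z \<in> {l2..h2}" by (rule assms(5))
qed auto

lemma bw:
  assumes "I \<in> case_prod Phi ` Q n"
  shows "I \<in> IC (two_by_n n) prod_le"
proof -
  from assms obtain A B where AB: "(A,B) \<in> Q n" and I: "I = Phi A B" by auto
  have "interval_closed (two_by_n n) prod_le (Phi A B)"
  proof (cases "(A,B) \<in> q ` Sn n")
    case True
    then obtain a2 a1 b2 b1 where t: "(a2,a1,b2,b1) \<in> Sn n" and e: "A = {a1..a2}" "B = {b1..b2}"
      unfolding q_def by auto
    have tt0: "1 \<le> a1 \<and> a1 \<le> a2 \<and> a2 \<le> n \<and>
   ((1 \<le> b1 \<and> b1 \<le> b2 \<and> b2 \<le> a1 - 1) \<or> (a1 \<le> b2 \<and> b2 \<le> a2 \<and> 1 \<le> b1 \<and> b1 \<le> a1))"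
      using t unfolding Sn_mem .
    then have h1: "1 \<le> a1" and h2: "a1 \<le> a2" and h3: "a2 \<le> n"
      and h4: "(1 \<le> b1 \<and> b1 \<le> b2 \<and> b2 \<le> a1 - 1) \<or> (a1 \<le> b2 \<and> b2 \<le> a2 \<and> 1 \<le> b1 \<and> b1 \<le> a1)"
      by simp_all
    have h5: "1 \<le> b1" "b2 \<le> n" using h4 h1 h2 h3 by linarith+
    show ?thesis unfolding e
    proof (rule Phi_IC_iv[OF h1 h3 h5])
      fix x y z :: nat assume xyz: "x \<in> {a1..a2}" "y \<in> {b1..b2}" "x \<le> z" "z \<le> y"
      then have "a1 \<le> x" "x \<le> a2" "b1 \<le> y" "y \<le> b2" by simp_all
      then show "z \<in> {a1..a2} \<and> z \<in> {b1..b2}" using h4 xyz(3,4) by auto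
    qed
  next
    case False
    then have "(A = {} \<and> B = {}) \<or> (A = {} \<and> B \<in> Iv n) \<or> (A \<in> Iv n \<and> B = {})"
      using AB False unfolding Q_def Un_iff by simp
    then show ?thesis
    proof (elim disjE conjE)
      assume "A = {}" "B = {}" then show ?thesis
        using Phi_IC_iv[of 1 0 n 1 0] by simp
    next
      assume a: "A = {}" "B \<in> Iv n"
      then obtain l h where "B = {l..h}" "1 \<le> l" "h \<le> n" using Iv_mem by blast
      then show ?thesis using a Phi_IC_iv[of 1 0 n l h] by simp
    next
      assume a: "A \<in> Iv n" "B = {}"
      then obtain l h where "A = {l..h}" "1 \<le> l" "h \<le> n" using Iv_mem by blast
      then show ?thesis using a Phi_IC_iv[of l h n 1 0] by simp
    qed
  qed
  then show ?thesis using I by (simp add: IC_def)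
qed

lemma IC_char: "IC (two_by_n n) prod_le = case_prod Phi ` Q n"
  by (meson fw bw subsetI equalityI)

theorem theorem4p2:
  fixes n :: nat
  assumes "n \<ge> 2"
  shows "real (card (IC (two_by_n n) prod_le))
    = 1 + 2 * (real (n choose 2) + real n) + (real n + 1) / 2 * real ((n + 2) choose 3)"
proof -
  have "card (IC (two_by_n n) prod_le) = card (Q n)"
    unfolding IC_char by (rule card_image) (rule inj_on_subset[OF Phi_inj], simp)
  also have "\<dots> = 1 + 2 * (\<Sum>h=1..n. h) + card (Sn n)" by (rule card_Q)
  finally have c: "card (IC (two_by_n n) prod_le) = 1 + 2 * (\<Sum>h=1..n. h) + card (Sn n)" .
  have s1: "real (\<Sum>h=1..n. h) = real n * (real n + 1) / 2" by (rule sum_id_nat_real)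
  have s2: "real (card (Sn n)) = real n * (real n + 1)^2 * (real n + 2) / 12"
    unfolding card_Sn of_nat_sum inner_real[unfolded of_nat_sum] outer_real ..
  have ch2: "2 * real (n choose 2) = real n * (real n - 1)"
  proof -
    have "2 * (n choose 2) = n * (n - 1)"
    proof (induction n)
      case (Suc m)
      have "Suc m choose 2 = m + (m choose 2)" by (simp add: numeral_2_eq_2)
      then show ?case using Suc by (cases m) (auto simp: algebra_simps)
    qed simp
    then have "real (2 * (n choose 2)) = real (n * (n-1))" by metis
    then show ?thesis using assms by (simp add: of_nat_diff)
  qed
  have ch3: "6 * real ((n + 2) choose 3) = real n * (real n + 1) * (real n + 2)"
  proof -
    have "real (6 * ((n + 2) choose 3)) = real (n * (n + 1) * (n + 2))" using choose3[of n] by metis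
    then show ?thesis by (simp add: algebra_simps)
  qed
  have e2: "real (n choose 2) = real n * (real n - 1) / 2" using ch2 by simp
  have e3: "real ((n + 2) choose 3) = real n * (real n + 1) * (real n + 2) / 6" using ch3 by simp
  have "real (card (IC (two_by_n n) prod_le)) = 1 + 2 * real (\<Sum>h=1..n. h) + real (card (Sn n))"
    unfolding c by simp
  also have "\<dots> = 1 + 2 * (real n * (real n + 1) / 2) + real n * (real n + 1)^2 * (real n + 2) / 12"
    unfolding s1 s2 ..
  also have "\<dots> = 1 + 2 * (real (n choose 2) + real n) + (real n + 1) / 2 * real ((n + 2) choose 3)"
    unfolding e2 e3 by (simp add: field_simps power2_eq_square)
  finally show ?thesis .
qed

end
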